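(* Let $\epsilon>0$, $T\in\mathbb{N}$, $B\ge T$, and define $k=2\lfloor B/T\rfloor$. Then there exists an instance of the UVP problem (with total budget $B$, maximum per-configuration budget $T$, smoothness parameter $\epsilon$) with $k$ clusters, each of radius $r_k>0$, such that no algorithm can achieve an approximation factor exceeding $(1-\epsilon r_k)$, where $r_k$ is the optimal clustering radius for $k$ clusters.
   Context: UVP problem: $A:\mathbb{R}^d\times[T]\to[0,1]$ is an unknown function ($[T]=\{1,\dots,T\}$); a finite set $\mathcal{X}\subset\mathbb{R}^d$ is known. The goal is $\max_{b_1,\dots,b_n}\max_{i}A(\mathbf{x}_i,b_i)$ subject to $\sum_i b_i\le B$, $b_i\in[T]$. Values are revealed only by evaluation; obtaining $A(\mathbf{x},b)$ requires evaluating $A(\mathbf{x},1),\dots,A(\mathbf{x},b)$ sequentially, costing $b$ units of budget. Instances satisfy Assumption 1 (monotonicity): $b_1\le b_2\Rightarrow A(\mathbf{x},b_1)\le A(\mathbf{x},b_2)$; and Assumption 2 (smoothness): for all $\mathbf{x}_i,\mathbf{x}_j\in\mathcal{X}$, $\min_{b\in[T]}A(\mathbf{x}_i,b)/A(\mathbf{x}_j,b)\ge1-\epsilon\|\mathbf{x}_i-\mathbf{x}_j\|_2$ (ratio $=1$ if both values are $0$, $=+\infty$ if only the denominator is $0$). The optimal clustering radius for $m$ clusters is $\min_{\mathcal{C}\subseteq\mathcal{X},|\mathcal{C}|=m}\max_{\mathbf{x}\in\mathcal{X}}\min_{\mathbf{c}\in\mathcal{C}}\|\mathbf{x}-\mathbf{c}\|_2$.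 An algorithm (possibly randomized) adaptively evaluates values within total budget $B$ and outputs $\mathbf{x}^{Alg}$; it achieves approximation factor $\alpha$ on an instance if $\mathbb{E}[A(\mathbf{x}^{Alg},T)]\ge\alpha\,\max_{\mathbf{x}\in\mathcal{X}}A(\mathbf{x},T)$. *)

theory Defs
  imports "HOL-Probability.Probability"
begin

text \<open>Points of R^d are encoded as functions nat => real vanishing at all
coordinates >= d (the dimension d is existentially quantified in the statement).\<close>

type_synonym point = "nat \<Rightarrow> real"

definition Rd :: "nat \<Rightarrow> point set" where
  "Rd d = {x. \<forall>i\<ge>d. x i = 0}"

definition ddist :: "nat \<Rightarrow> point \<Rightarrow> point \<Rightarrow> real" where
  "ddist d x y = sqrt (\<Sum>i<d. (x i - y i)^2)"

definition opt_radius :: "nat \<Rightarrow> point set \<Rightarrow> nat \<Rightarrow> real" where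
  "opt_radius d X m =
     Min {Max ((\<lambda>x. Min ((\<lambda>c. ddist d x c) ` C)) ` X) | C. C \<subseteq> X \<and> card C = m}"

definition ratio :: "real \<Rightarrow> real \<Rightarrow> ereal" where
  "ratio a b = (if a = 0 \<and> b = 0 then 1 else if b = 0 then \<infinity> else ereal (a / b))"

text \<open>A valid UVP value function: values in [0,1], Assumption 1 (monotone in the
budget), Assumption 2 (smoothness on X).\<close>
definition valid_instance :: "nat \<Rightarrow> point set \<Rightarrow> nat \<Rightarrow> real \<Rightarrow> (point \<Rightarrow> nat \<Rightarrow> real) \<Rightarrow> bool" where
  "valid_instance d X T \<epsilon> A \<longleftrightarrow>
     (\<forall>x\<in>Rd d. \<forall>b\<in>{1..T}. 0 \<le> A x b \<and> A x b \<le> 1) \<and>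
     (\<forall>x\<in>Rd d. \<forall>b1\<in>{1..T}. \<forall>b2\<in>{1..T}. b1 \<le> b2 \<longrightarrow> A x b1 \<le> A x b2) \<and>
     (\<forall>xi\<in>X. \<forall>xj\<in>X. \<forall>b\<in>{1..T}.
        ereal (1 - \<epsilon> * ddist d xi xj) \<le> ratio (A xi b) (A xj b))"

text \<open>A deterministic adaptive algorithm: a query policy (given the history of
observations, either ask for the next budget level of a configuration, or stop)
and an output rule (given the final history, output a configuration).\<close>
type_synonym history = "(point \<times> real) list"
type_synonym det_alg = "(history \<Rightarrow> point option) \<times> (history \<Rightarrow> point)"

definition cnt :: "point \<Rightarrow> history \<Rightarrow> nat" where
  "cnt x h = length (filter (\<lambda>p. fst p = x) h)"

text \<open>Execution with remaining budget n (each evaluation costs one unit; evaluating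
configuration x again reveals its next budget level; at most T levels per
configuration).\<close>
fun run :: "nat \<Rightarrow> det_alg \<Rightarrow> point set \<Rightarrow> nat \<Rightarrow> (point \<Rightarrow> nat \<Rightarrow> real) \<Rightarrow> history \<Rightarrow> point" where
  "run 0 alg X T A h = snd alg h"
| "run (Suc n) alg X T A h =
     (case fst alg h of
        None \<Rightarrow> snd alg h
      | Some x \<Rightarrow> if x \<in> X \<and> cnt x h < T
                  then run n alg X T A (h @ [(x, A x (cnt x h + 1))])
                  else snd alg h)"

definition alg_output :: "nat \<Rightarrow> point set \<Rightarrow> nat \<Rightarrow> det_alg \<Rightarrow> (point \<Rightarrow> nat \<Rightarrow> real) \<Rightarrow> point" where
  "alg_output B X T alg A = run B alg X T A []"

text \<open>A randomized algorithm: a probability distribution over deterministic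
algorithms, whose outputs lie in X and whose performance is measurable.\<close>
definition rand_alg :: "point set \<Rightarrow> nat \<Rightarrow> nat \<Rightarrow> det_alg measure \<Rightarrow> bool" where
  "rand_alg X T B M \<longleftrightarrow> prob_space M \<and>
     (\<forall>alg\<in>space M. \<forall>h. snd alg h \<in> X) \<and>
     (\<forall>A. (\<lambda>alg. A (alg_output B X T alg A) T) \<in> borel_measurable M)"

definition expected_value :: "nat \<Rightarrow> point set \<Rightarrow> nat \<Rightarrow> det_alg measure \<Rightarrow> (point \<Rightarrow> nat \<Rightarrow> real) \<Rightarrow> real" where
  "expected_value B X T M A = (\<integral>alg. A (alg_output B X T alg A) T \<partial>M)"

end

theory Submission
  imports Defs
begin


fun hist :: "nat \<Rightarrow> det_alg \<Rightarrow> point set \<Rightarrow> nat \<Rightarrow> (point \<Rightarrow> nat \<Rightarrow> real) \<Rightarrow> history \<Rightarrow> history" where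
  "hist 0 alg X T A h = h"
| "hist (Suc n) alg X T A h =
     (case fst alg h of
        None \<Rightarrow> h
      | Some x \<Rightarrow> if x \<in> X \<and> cnt x h < T
                  then hist n alg X T A (h @ [(x, A x (cnt x h + 1))])
                  else h)"

lemma run_hist: "run n alg X T A h = snd alg (hist n alg X T A h)"
  by (induction n arbitrary: h) (auto split: option.split)

lemma hist_prefix: "\<exists>e. hist n alg X T A h = h @ e"
proof (induction n arbitrary: h)
  case 0 then show ?case by auto
next
  case (Suc n)
  show ?case
  proof (cases "fst alg h")
    case None then show ?thesis by auto
  next
    case (Some x)
    obtain e where "hist n alg X T A (h @ [(x, A x (cnt x h + 1))]) = (h @ [(x, A x (cnt x h + 1))]) @ e"
      using Suc by blast
    then show ?thesis using Some by auto
  qed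
qed

lemma cnt_append: "cnt x (h @ e) = cnt x h + cnt x e" by (simp add: cnt_def)

lemma cnt_hist_mono: "cnt x h \<le> cnt x (hist n alg X T A h)"
  using hist_prefix[of n alg X T A h] by (auto simp: cnt_append)

lemma hist_length: "length (hist n alg X T A h) \<le> length h + n"
proof (induction n arbitrary: h)
  case 0 then show ?case by simp
next
  case (Suc n)
  show ?case
  proof (cases "fst alg h")
    case None then show ?thesis by simp
  next
    case (Some x)
    have "length (hist n alg X T A (h @ [(x, A x (cnt x h + 1))])) \<le> length h + Suc n"
      using Suc.IH[of "h @ [(x, A x (cnt x h + 1))]"] by simp
    then show ?thesis using Some by auto
  qed
qed

lemma hist_agree:
  assumes "\<forall>x\<in>X. \<forall>b. b < T \<longrightarrow> A x b = A' x b"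
  and "\<forall>x\<in>X. A x T \<noteq> A' x T \<longrightarrow> cnt x (hist n alg X T A h) < T"
  shows "hist n alg X T A' h = hist n alg X T A h"
  using assms(2)
proof (induction n arbitrary: h)
  case 0 then show ?case by simp
next
  case (Suc n)
  show ?case
  proof (cases "fst alg h")
    case None then show ?thesis by auto
  next
    case (Some x)
    show ?thesis
    proof (cases "x \<in> X \<and> cnt x h < T")
      case False then show ?thesis using Some by auto
    next
      case True
      let ?h = "h @ [(x, A x (cnt x h + 1))]"
      have H: "hist (Suc n) alg X T A h = hist n alg X T A ?h" using Some True by simp
      have eq: "A x (cnt x h + 1) = A' x (cnt x h + 1)"
      proof (cases "cnt x h + 1 < T")
        case True2: True
        then show ?thesis using assms(1) True by auto
      next
        case False
        then have c: "cnt x h + 1 = T" using True by auto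
        have "cnt x ?h = T" using c by (simp add: cnt_append cnt_def)
        then have "\<not> cnt x (hist n alg X T A ?h) < T"
          using cnt_hist_mono[of x ?h n alg X T A] by auto
        then show ?thesis using Suc.prems H True c by metis
      qed
      have "hist n alg X T A' ?h = hist n alg X T A ?h"
        using Suc.IH[of ?h] Suc.prems H by auto
      then show ?thesis using Some True H eq by simp
    qed
  qed
qed

lemma sum_cnt_le: "finite P \<Longrightarrow> (\<Sum>x\<in>P. cnt x H) \<le> length H"
proof (induction H)
  case Nil then show ?case by (simp add: cnt_def)
next
  case (Cons a H)
  have c: "cnt x (a # H) = (if fst a = x then 1 else 0) + cnt x H" for x
    by (simp add: cnt_def)
  have "(\<Sum>x\<in>P. cnt x (a # H)) = (\<Sum>x\<in>P. (if fst a = x then 1 else 0)) + (\<Sum>x\<in>P. cnt x H)"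
    unfolding c by (simp add: sum.distrib)
  also have "(\<Sum>x\<in>P. (if fst a = x then 1 else 0::nat)) \<le> 1"
    using Cons.prems by (simp add: sum.delta)
  finally show ?case using Cons by simp
qed



definition inst :: "point set \<Rightarrow> nat \<Rightarrow> (point \<Rightarrow> nat) \<Rightarrow> nat \<Rightarrow> real \<Rightarrow> point \<Rightarrow> nat \<Rightarrow> real" where
  "inst X T cl j t x b = (if T \<le> b \<and> x \<in> X then (if cl x = j then t else 1/2) else 0)"

definition base :: "point set \<Rightarrow> nat \<Rightarrow> point \<Rightarrow> nat \<Rightarrow> real" where
  "base X T x b = (if T \<le> b \<and> x \<in> X then 1/2 else 0)"

lemma ratio_nonneg: "0 \<le> a \<Longrightarrow> 0 \<le> b \<Longrightarrow> 0 \<le> ratio a b"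
  by (auto simp: ratio_def)

lemma ratio_same: "ratio a a = 1"
  by (auto simp: ratio_def one_ereal_def)

lemma ddist_nonneg: "0 \<le> ddist d x y"
  by (simp add: ddist_def sum_nonneg)

lemma valid_inst:
  assumes eps: "\<epsilon> > 0" and t: "0 \<le> t" "t \<le> 1"
  and far: "\<forall>xi\<in>X. \<forall>xj\<in>X. cl xi \<noteq> cl xj \<longrightarrow> 1 \<le> \<epsilon> * ddist d xi xj"
  shows "valid_instance d X T \<epsilon> (inst X T cl j t)"
  unfolding valid_instance_def
proof (intro conjI ballI impI)
  fix x b assume "b \<in> {1..T}"
  show "0 \<le> inst X T cl j t x b" "inst X T cl j t x b \<le> 1" using t by (auto simp: inst_def)
next
  fix x b1 b2 assume "b1 \<in> {1..T}" "b2 \<in> {1..T}" "b1 \<le> b2"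
  then show "inst X T cl j t x b1 \<le> inst X T cl j t x b2" using t by (auto simp: inst_def)
next
  fix xi xj b assume xi: "xi \<in> X" and xj: "xj \<in> X" and "b \<in> {1..T}"
  show "ereal (1 - \<epsilon> * ddist d xi xj) \<le> ratio (inst X T cl j t xi b) (inst X T cl j t xj b)"
  proof (cases "cl xi = cl xj")
    case True
    then have "inst X T cl j t xi b = inst X T cl j t xj b" using xi xj by (simp add: inst_def)
    moreover have "1 - \<epsilon> * ddist d xi xj \<le> 1" using eps ddist_nonneg[of d xi xj] by simp
    ultimately show ?thesis by (simp add: ratio_same one_ereal_def)
  next
    case False
    then have "1 - \<epsilon> * ddist d xi xj \<le> 0" using far xi xj by auto
    moreover have "0 \<le> ratio (inst X T cl j t xi b) (inst X T cl j t xj b)"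
      using t by (intro ratio_nonneg) (auto simp: inst_def)
    ultimately show ?thesis by (metis dual_order.trans ereal_less_eq(3) zero_ereal_def)
  qed
qed

lemma pointwise_bound:
  assumes T: "T \<ge> 1" and fin: "finite X"
  shows "(\<Sum>j<k. 2 * inst X T cl j 0 (alg_output B X T alg (inst X T cl j 0)) T
                 + inst X T cl j 1 (alg_output B X T alg (inst X T cl j 1)) T)
         \<le> 3/2 * k + 1/2 * real (B div T)"
proof -
  define H where "H = hist B alg X T (base X T) []"
  define P where "P = {x\<in>X. T \<le> cnt x H}"
  define J where "J = cl ` P"
  have finP: "finite P" using fin by (simp add: P_def)
  have "T * card P \<le> (\<Sum>x\<in>P. cnt x H)"
    using sum_bounded_below[of P T "\<lambda>x. cnt x H"] by (auto simp: P_def mult.commute)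
  also have "\<dots> \<le> length H" using sum_cnt_le[OF finP] .
  also have "\<dots> \<le> B" using hist_length[of B alg X T "base X T" "[]"] by (simp add: H_def)
  finally have "card P * T \<le> B" by (simp add: mult.commute)
  then have cP: "card P \<le> B div T" using T by (simp add: less_eq_div_iff_mult_less_eq)
  have cJ: "card J \<le> B div T" using card_image_le[OF finP, of cl] cP by (simp add: J_def)
  have finJ: "finite J" using finP by (simp add: J_def)
  let ?g = "\<lambda>j. 2 * inst X T cl j 0 (alg_output B X T alg (inst X T cl j 0)) T
                 + inst X T cl j 1 (alg_output B X T alg (inst X T cl j 1)) T"
  have gb: "?g j \<le> 3/2 + (if j \<in> J then 1/2 else 0)" for j
  proof (cases "j \<in> J")
    case True
    then show ?thesis by (auto simp: inst_def)
  next
    case False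
    have same: "alg_output B X T alg (inst X T cl j t) = snd alg H" for t
    proof -
      have "hist B alg X T (inst X T cl j t) [] = H"
        unfolding H_def
      proof (rule hist_agree)
        show "\<forall>x\<in>X. \<forall>b. b < T \<longrightarrow> base X T x b = inst X T cl j t x b"
          by (auto simp: base_def inst_def)
        show "\<forall>x\<in>X. base X T x T \<noteq> inst X T cl j t x T \<longrightarrow> cnt x (hist B alg X T (base X T) []) < T"
          using False by (auto simp: base_def inst_def J_def P_def H_def split: if_splits)
      qed
      then show ?thesis by (simp add: alg_output_def run_hist)
    qed
    show ?thesis using False unfolding same by (auto simp: inst_def)
  qed
  have "(\<Sum>j<k. ?g j) \<le> (\<Sum>j<k. 3/2 + (if j \<in> J then 1/2 else 0))"
    by (rule sum_mono) (rule gb)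
  also have "\<dots> = 3/2 * k + 1/2 * card ({..<k} \<inter> J)"
    by (simp add: sum.distrib sum.If_cases)
  finally have S: "(\<Sum>j<k. ?g j) \<le> 3/2 * k + 1/2 * card ({..<k} \<inter> J)" .
  have "card ({..<k} \<inter> J) \<le> card J" by (rule card_mono[OF finJ]) auto
  then have "real (card ({..<k} \<inter> J)) \<le> real (B div T)" using cJ by linarith
  then show ?thesis using S by linarith
qed



lemma key_bound:
  assumes R: "rand_alg X T B M" and T: "T \<ge> 1" and fin: "finite X"
  shows "(\<Sum>j<k. 2 * expected_value B X T M (inst X T cl j 0) + expected_value B X T M (inst X T cl j 1))
         \<le> 3/2 * k + 1/2 * real (B div T)"
proof -
  interpret prob_space M using R by (simp add: rand_alg_def)
  have meas: "\<And>A. (\<lambda>alg. A (alg_output B X T alg A) T) \<in> borel_measurable M"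
    using R by (simp add: rand_alg_def)
  let ?f = "\<lambda>j t alg. inst X T cl j t (alg_output B X T alg (inst X T cl j t)) T"
  have int: "integrable M (?f j t)" if "0 \<le> t" "t \<le> 1" for j t
  proof (rule integrable_const_bound[where B=1])
    show "AE alg in M. norm (?f j t alg) \<le> 1" using that by (intro AE_I2) (simp add: inst_def)
    show "?f j t \<in> borel_measurable M" by (rule meas)
  qed
  have "(\<Sum>j<k. 2 * expected_value B X T M (inst X T cl j 0) + expected_value B X T M (inst X T cl j 1))
      = (\<Sum>j<k. \<integral>alg. 2 * ?f j 0 alg + ?f j 1 alg \<partial>M)"
    by (intro sum.cong refl) (simp add: expected_value_def int)
  also have "\<dots> = \<integral>alg. (\<Sum>j<k. 2 * ?f j 0 alg + ?f j 1 alg) \<partial>M"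
    by (rule Bochner_Integration.integral_sum[where I="{..<k}" and f="\<lambda>j alg. 2 * ?f j 0 alg + ?f j 1 alg", symmetric]) (simp add: int)
  also have "\<dots> \<le> \<integral>alg. (3/2 * k + 1/2 * real (B div T)) \<partial>M"
  proof (rule integral_mono)
    show "integrable M (\<lambda>alg. \<Sum>j<k. 2 * ?f j 0 alg + ?f j 1 alg)" by (simp add: int)
    show "integrable M (\<lambda>alg. 3/2 * real k + 1/2 * real (B div T))" by simp
    show "(\<Sum>j<k. 2 * ?f j 0 alg + ?f j 1 alg) \<le> 3/2 * real k + 1/2 * real (B div T)" for alg
      by (rule pointwise_bound[OF T fin])
  qed
  also have "\<dots> = 3/2 * k + 1/2 * real (B div T)" by (simp add: prob_space)
  finally show ?thesis .
qed



definition pt :: "real \<Rightarrow> point" where "pt a = (\<lambda>i. if i = 0 then a else 0)"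

definition pos :: "real \<Rightarrow> nat \<Rightarrow> real" where
  "pos L m = real (m div 2) * L + real (m mod 2) * (L / 16)"

lemma pt_Rd: "pt a \<in> Rd 1" by (simp add: pt_def Rd_def)

lemma ddist_pt: "ddist 1 (pt a) (pt b) = \<bar>a - b\<bar>"
  by (simp add: ddist_def pt_def)

lemma ddist_pt1: "ddist (Suc 0) (pt a) (pt b) = \<bar>a - b\<bar>"
  by (simp add: ddist_def pt_def)

lemma pt_inj: "pt a = pt b \<Longrightarrow> a = b"
  by (metis pt_def)

lemma floor_pos: assumes "L > 0" shows "\<lfloor>pos L m / L\<rfloor> = int (m div 2)"
proof -
  have "pos L m / L = real (m div 2) + real (m mod 2) / 16"
    using assms by (simp add: pos_def field_simps)
  moreover have "real (m mod 2) / 16 < 1" "0 \<le> real (m mod 2) / 16"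
    by (auto simp: mod_less_divisor)
  ultimately show ?thesis by (intro floor_unique) auto
qed

lemma pos_inj: assumes "L > 0" "pos L m = pos L m'" shows "m = m'"
proof -
  have d: "m div 2 = m' div 2" using floor_pos[OF assms(1), of m] floor_pos[OF assms(1), of m'] assms(2) by simp
  then have "real (m mod 2) * (L / 16) = real (m' mod 2) * (L / 16)" using assms(2) by (simp add: pos_def)
  then have "m mod 2 = m' mod 2" using assms(1) by simp
  with d show ?thesis by (metis div_mult_mod_eq)
qed

lemma pos_far:
  assumes L: "L > 0" and "m div 2 \<noteq> m' div 2"
  shows "15/16 * L \<le> \<bar>pos L m - pos L m'\<bar>"
proof -
  define a where "a = real (m div 2) - real (m' div 2)"
  define e where "e = real (m mod 2) - real (m' mod 2)"
  have a: "1 \<le> \<bar>a\<bar>" using assms(2) unfolding a_def by linarith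
  have e: "\<bar>e\<bar> \<le> 1" unfolding e_def
    using mod_less_divisor[of 2 m] mod_less_divisor[of 2 m'] by (simp add: abs_le_iff) linarith
  have "pos L m - pos L m' = L * (a + e / 16)" by (simp add: pos_def a_def e_def field_simps)
  then have "\<bar>pos L m - pos L m'\<bar> = L * \<bar>a + e/16\<bar>" using L by (simp add: abs_mult)
  moreover have "15/16 \<le> \<bar>a + e/16\<bar>" using a e by (simp add: abs_if split: if_splits) linarith?
  ultimately show ?thesis using L by (metis mult.commute mult_left_mono less_imp_le)
qed

lemma pos_near:
  assumes L: "L > 0" and "m div 2 = m' div 2"
  shows "\<bar>pos L m - pos L m'\<bar> \<le> L / 16"
proof -
  have "m mod 2 \<le> 1" "m' mod 2 \<le> 1" by auto
  then have "\<bar>real (m mod 2) - real (m' mod 2)\<bar> \<le> 1" by (auto simp add: abs_le_iff)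
  moreover have E: "pos L m - pos L m' = (real (m mod 2) - real (m' mod 2)) * (L / 16)"
    using assms(2) by (simp add: pos_def algebra_simps)
  ultimately have "\<bar>pos L m - pos L m'\<bar> = \<bar>real (m mod 2) - real (m' mod 2)\<bar> * (L / 16)"
    unfolding E abs_mult using L by simp
  also have "\<dots> \<le> 1 * (L / 16)" by (rule mult_right_mono) (use calculation L in auto)
  finally show ?thesis by simp
qed



theorem corollary1:
  fixes \<epsilon> :: real and T B :: nat
  assumes "\<epsilon> > 0" and "T \<ge> 1" and "B \<ge> T"
  defines "k \<equiv> 2 * (B div T)"
  shows "\<exists>d X. finite X \<and> X \<subseteq> Rd d \<and> k \<le> card X \<and> opt_radius d X k > 0 \<and>
    (\<forall>M. rand_alg X T B M \<longrightarrow>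
       (\<forall>\<alpha>. \<alpha> > 1 - \<epsilon> * opt_radius d X k \<longrightarrow>
          (\<exists>A. valid_instance d X T \<epsilon> A \<and>
               expected_value B X T M A < \<alpha> * Max ((\<lambda>x. A x T) ` X))))"
proof -
  define q where "q = B div T"
  have "T div T \<le> B div T" using assms(3) by (rule div_le_mono)
  then have q1: "q \<ge> 1" using assms(2) by (simp add: q_def)
  have kq: "k = 2 * q" by (simp add: k_def q_def)
  define L where "L = 2 / \<epsilon>"
  have L: "L > 0" using assms(1) by (simp add: L_def)
  define X where "X = (\<lambda>m. pt (pos L m)) ` {..<2*k}"
  define cl where "cl = (\<lambda>x::point. nat \<lfloor>x 0 / L\<rfloor>)"
  have clX: "cl (pt (pos L m)) = m div 2" for m
    using floor_pos[OF L, of m] by (simp add: cl_def pt_def)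
  have finX: "finite X" by (simp add: X_def)
  have XRd: "X \<subseteq> Rd 1" by (auto simp: X_def pt_def Rd_def)
  have injX: "inj_on (\<lambda>m. pt (pos L m)) A" for A
    by (rule inj_onI) (metis pt_inj pos_inj[OF L])
  have cardX: "card X = 2 * k" using card_image[OF injX] by (simp add: X_def)
  have memX: "pt (pos L m) \<in> X" if "m < 2 * k" for m using that by (simp add: X_def)
  have far: "\<forall>xi\<in>X. \<forall>xj\<in>X. cl xi \<noteq> cl xj \<longrightarrow> 1 \<le> \<epsilon> * ddist 1 xi xj"
  proof (intro ballI impI)
    fix xi xj assume "xi \<in> X" "xj \<in> X" "cl xi \<noteq> cl xj"
    then obtain m m' where xi: "xi = pt (pos L m)" and xj: "xj = pt (pos L m')" and "m div 2 \<noteq> m' div 2"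
      by (auto simp: X_def clX)
    then have "15/16 * L \<le> ddist 1 xi xj" using pos_far[OF L] by (simp add: ddist_pt ddist_pt1)
    then have "\<epsilon> * (15/16 * L) \<le> \<epsilon> * ddist 1 xi xj" using assms(1) by simp
    moreover have "\<epsilon> * (15/16 * L) = 15/8" using assms(1) by (simp add: L_def)
    ultimately show "1 \<le> \<epsilon> * ddist 1 xi xj" by linarith
  qed
  define F where "F = (\<lambda>C. Max ((\<lambda>x. Min ((\<lambda>c. ddist 1 x c) ` C)) ` X))"
  define S where "S = {F C | C. C \<subseteq> X \<and> card C = k}"
  have optS: "opt_radius 1 X k = Min S" by (simp add: opt_radius_def S_def F_def)
  have finS: "finite S"
  proof -
    have "S \<subseteq> F ` Pow X" by (auto simp: S_def)
    then show ?thesis using finX finite_subset by blast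
  qed
  define C0 where "C0 = (\<lambda>j. pt (pos L (2*j))) ` {..<k}"
  have C0X: "C0 \<subseteq> X" using kq by (auto simp: C0_def X_def)
  have injC0: "inj_on (\<lambda>j. pt (pos L (2*j))) {..<k}"
    by (rule inj_onI) (metis pt_inj pos_inj[OF L] mult_left_cancel zero_neq_numeral)
  have cardC0: "card C0 = k" using card_image[OF injC0] by (simp add: C0_def)
  have finC0: "finite C0" by (simp add: C0_def)
  have C0S: "F C0 \<in> S" using C0X cardC0 by (auto simp: S_def)
  have FC0: "F C0 \<le> L / 16"
    unfolding F_def
  proof (rule Max.boundedI)
    show "finite ((\<lambda>x. Min ((\<lambda>c. ddist 1 x c) ` C0)) ` X)" using finX by simp
    show "(\<lambda>x. Min ((\<lambda>c. ddist 1 x c) ` C0)) ` X \<noteq> {}" using memX[of 0] kq q1 by auto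
  next
    fix y assume "y \<in> (\<lambda>x. Min ((\<lambda>c. ddist 1 x c) ` C0)) ` X"
    then obtain m where m: "m < 2 * k" and y: "y = Min ((\<lambda>c. ddist 1 (pt (pos L m)) c) ` C0)"
      by (auto simp: X_def)
    have mk: "m div 2 < k" using m by auto
    have c: "pt (pos L (2 * (m div 2))) \<in> C0" using mk by (simp add: C0_def)
    have "y \<le> ddist 1 (pt (pos L m)) (pt (pos L (2 * (m div 2))))"
      unfolding y by (rule Min_le) (use finC0 c in auto)
    also have "\<dots> \<le> L / 16" unfolding ddist_pt by (rule pos_near[OF L]) simp
    finally show "y \<le> L / 16" .
  qed
  have opt_le: "opt_radius 1 X k \<le> L / 16"
    unfolding optS using Min_le[OF finS C0S] FC0 by linarith
  have opt_pos: "opt_radius 1 X k > 0"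
    unfolding optS
  proof (subst Min_gr_iff[OF finS])
    show "S \<noteq> {}" using C0S by auto
    show "\<forall>a\<in>S. 0 < a"
    proof
      fix a assume "a \<in> S"
      then obtain C where CX: "C \<subseteq> X" and cC: "card C = k" and a: "a = F C" by (auto simp: S_def)
      have "C \<noteq> X" using cC cardX kq q1 by auto
      then obtain x where xX: "x \<in> X" and xC: "x \<notin> C" using CX by auto
      have finC: "finite C" using CX finX finite_subset by blast
      have neC: "C \<noteq> {}" using cC kq q1 by auto
      have "0 < Min ((\<lambda>c. ddist 1 x c) ` C)"
      proof (subst Min_gr_iff, simp add: finC, simp add: neC, intro ballI)
        fix y assume "y \<in> (\<lambda>c. ddist 1 x c) ` C"
        then obtain c where cCc: "c \<in> C" and y: "y = ddist 1 x c" by auto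
        obtain m m' where "x = pt (pos L m)" "c = pt (pos L m')"
          using xX cCc CX by (auto simp: X_def)
        moreover have "x \<noteq> c" using xC cCc by auto
        ultimately show "0 < y" unfolding y by (auto simp: ddist_pt ddist_pt1)
      qed
      also have "\<dots> \<le> F C" unfolding F_def by (rule Max_ge) (use finX xX in auto)
      finally show "0 < a" using a by simp
    qed
  qed
  show ?thesis
  proof (intro exI[of _ 1] exI[of _ X] conjI allI impI)
    show "finite X" "X \<subseteq> Rd 1" "k \<le> card X" "0 < opt_radius 1 X k"
      using finX XRd cardX opt_pos by auto
  next
    fix M \<alpha> assume R: "rand_alg X T B M" and al: "1 - \<epsilon> * opt_radius 1 X k < \<alpha>"
    have "\<epsilon> * opt_radius 1 X k \<le> \<epsilon> * (L / 16)" using opt_le assms(1) by simp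
    also have "\<epsilon> * (L / 16) = 1/8" using assms(1) by (simp add: L_def)
    finally have al8: "\<alpha> > 7/8" using al by linarith
    show "\<exists>A. valid_instance 1 X T \<epsilon> A \<and> expected_value B X T M A < \<alpha> * Max ((\<lambda>x. A x T) ` X)"
    proof (rule ccontr)
      assume "\<not> ?thesis"
      then have H: "\<alpha> * Max ((\<lambda>x. A x T) ` X) \<le> expected_value B X T M A"
        if "valid_instance 1 X T \<epsilon> A" for A using that by (auto simp: not_less)
      have E1: "\<alpha> \<le> expected_value B X T M (inst X T cl j 1)" if "j < k" for j
      proof -
        have "1 \<le> Max ((\<lambda>x. inst X T cl j 1 x T) ` X)"
        proof -
          have "inst X T cl j 1 (pt (pos L (2*j))) T = 1" using memX[of "2*j"] that
            by (simp add: inst_def clX)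
          moreover have "inst X T cl j 1 (pt (pos L (2*j))) T \<le> Max ((\<lambda>x. inst X T cl j 1 x T) ` X)"
            by (rule Max_ge) (use finX memX[of "2*j"] that in auto)
          ultimately show ?thesis by simp
        qed
        then have "\<alpha> * 1 \<le> \<alpha> * Max ((\<lambda>x. inst X T cl j 1 x T) ` X)" using al8 by simp
        also have "\<dots> \<le> expected_value B X T M (inst X T cl j 1)"
          by (rule H, rule valid_inst[OF assms(1)]) (use far in auto)
        finally show ?thesis by simp
      qed
      have E0: "\<alpha> / 2 \<le> expected_value B X T M (inst X T cl j 0)" if "j < k" for j
      proof -
        define j' where "j' = (if j = 0 then 1 else 0::nat)"
        have j': "j' \<noteq> j" "2 * j' < 2 * k" using kq q1 by (auto simp: j'_def)
        have "1/2 \<le> Max ((\<lambda>x. inst X T cl j 0 x T) ` X)"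
        proof -
          have "inst X T cl j 0 (pt (pos L (2*j'))) T = 1/2" using memX[of "2*j'"] j'
            by (simp add: inst_def clX)
          moreover have "inst X T cl j 0 (pt (pos L (2*j'))) T \<le> Max ((\<lambda>x. inst X T cl j 0 x T) ` X)"
            by (rule Max_ge) (use finX memX[of "2*j'"] j' in auto)
          ultimately show ?thesis by simp
        qed
        then have "\<alpha> * (1/2) \<le> \<alpha> * Max ((\<lambda>x. inst X T cl j 0 x T) ` X)" using al8 by simp
        also have "\<dots> \<le> expected_value B X T M (inst X T cl j 0)"
          by (rule H, rule valid_inst[OF assms(1)]) (use far in auto)
        finally show ?thesis by simp
      qed
      have "(\<Sum>j<k. 2 * \<alpha>) \<le> (\<Sum>j<k. 2 * expected_value B X T M (inst X T cl j 0) + expected_value B X T M (inst X T cl j 1))"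
        by (rule sum_mono) (use E0 E1 in fastforce)
      also have "\<dots> \<le> 3/2 * k + 1/2 * real (B div T)"
        by (rule key_bound[OF R assms(2) finX])
      finally have "2 * \<alpha> * real k \<le> 3/2 * k + 1/2 * real q" by (simp add: q_def mult.commute)
      then have "4 * \<alpha> * real q \<le> 7/2 * real q" using kq by simp
      moreover have "7/2 * real q < 4 * \<alpha> * real q" using al8 q1 by simp
      ultimately show False by simp
    qed
  qed
qed

end
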